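(* Let $\mathcal S$ be an aperiodic primitive qubit spin substitution in $\mathbb Z^m$ with spin matrix $W$ and spin group $G$, with subshift $(\Sigma,\mathbb Z^m,\mu)$. For each $\chi\in\widehat G$ there is a substitutive factor $\mathcal S^{(\chi)}$ over the alphabet $\mathcal A^{(\chi)}=G/\ker(\chi)\times\mathcal D$, namely the qubit spin substitution defined by the matrix $\chi(W)$ (see context), with factor map induced by $g\mathsf d\mapsto(\chi(g),\vec d)$. Moreover, the spectral type of $H^\chi$ is absolutely continuous with respect to the maximal spectral type of (the subshift of) $\mathcal S^{(\chi)}$.
   Context: $Q$ is an expansive endomorphism of $\mathbb Z^m$, $\mathcal D$ a complete set of coset representatives of $\mathbb Z^m/Q\mathbb Z^m$. Spin substitution: finite abelian group $G$, $W:\mathcal D\times\mathcal D\to G$, alphabet $G\times\mathcal D$ with letters $g\mathsf d$, $\mathcal S(g\mathsf d,\vec d')=(gW(\vec d,\vec d'))\mathsf d'$; supertiles obtained by iterating; $\Sigma$ the nonempty set of configurations whose rectangular subpatterns occur in supertiles, with shift $(\mathcal T-\vec j)(\vec x)=\mathcal T(\vec x+\vec j)$ and frequency measure $\mu$; primitive = substitution matrix has a positive power; aperiodic = no element of $\Sigma$ has a nonzero period. $\pi_G(g\mathsf d)=g$, $\pi_{\mathcal D}(g\mathsf d)=\vec d$. Identify $G/\ker\chi$ with the cyclic group $\chi(G)\subset S^1$. The factor substitution $\mathcal S^{(\chi)}$ on $\chi(G)\times\mathcal D$ is $\mathcal S^{(\chi)}((z,\vec d),\vec d')=(z\,\chi(W(\vec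 d,\vec d')),\vec d')$; its factor map sends $\mathcal T$ to the configuration $\vec x\mapsto(\chi(\pi_G(\mathcal T(\vec x))),\pi_{\mathcal D}(\mathcal T(\vec x)))$. $U_{\vec j}f(\mathcal T)=f(\mathcal T-\vec j)$; spectral measures on $\mathbb T^m$ via $\langle U_{\vec j}f,f\rangle=\int z^{\vec j}d\sigma_f$; $f^\chi_{\mathsf d}(\mathcal T)=\chi(\pi_G(\mathcal T(0)))$ if $\pi_{\mathcal D}(\mathcal T(0))=\vec d$, else $0$; $H^\chi$ is the closed linear span of $\{U_{\vec j}f^\chi_{\mathsf d}:\vec j\in\mathbb Z^m,\vec d\in\mathcal D\}$. The maximal spectral type of a system is that of the Koopman representation on its $L^2$ space. *)

theory Defs
  imports "HOL-Analysis.Analysis" "HOL-Probability.Probability"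
begin

definition expansive :: "int ^ 'm ^ 'm \<Rightarrow> bool" where
  "expansive Q \<longleftrightarrow>
     (\<forall>z::complex. det (mat z - (\<chi> i j. complex_of_int (Q $ i $ j))) = 0 \<longrightarrow> 1 < cmod z)"

definition coset_reps :: "int ^ 'm ^ 'm \<Rightarrow> (int ^ 'm) set \<Rightarrow> bool" where
  "coset_reps Q D \<longleftrightarrow> (\<forall>x. \<exists>!d. d \<in> D \<and> (\<exists>y. x = d + Q *v y))"

text \<open>Letters are pairs (g, d). The group is given by a carrier A and an operation gop;
  W maps pairs of digits into the group. The substituted letter at digit d' is
  (g * W(d,d'), d').\<close>

definition subst_letter ::
  "('a \<Rightarrow> 'a \<Rightarrow> 'a) \<Rightarrow> (int ^ 'm \<Rightarrow> int ^ 'm \<Rightarrow> 'a) \<Rightarrow> 'a \<times> (int ^ 'm) \<Rightarrow> int ^ 'm \<Rightarrow> 'a \<times> (int ^ 'm)" where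
  "subst_letter gop W l d' = (gop (fst l) (W (snd l) d'), d')"

text \<open>Substitution applied to a (partial) patch: position Q x + d' gets S(P x, d').\<close>
definition subst_patch ::
  "int ^ 'm ^ 'm \<Rightarrow> (int ^ 'm) set \<Rightarrow> ('a \<Rightarrow> 'a \<Rightarrow> 'a) \<Rightarrow> (int ^ 'm \<Rightarrow> int ^ 'm \<Rightarrow> 'a)
    \<Rightarrow> (int ^ 'm \<Rightarrow> ('a \<times> (int ^ 'm)) option) \<Rightarrow> (int ^ 'm \<Rightarrow> ('a \<times> (int ^ 'm)) option)" where
  "subst_patch Q D gop W P y =
     (if \<exists>x d'. d' \<in> D \<and> y = Q *v x + d' \<and> P x \<noteq> None
      then (let xd = (SOME xd. snd xd \<in> D \<and> y = Q *v fst xd + snd xd \<and> P (fst xd) \<noteq> None)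
            in Some (subst_letter gop W (the (P (fst xd))) (snd xd)))
      else None)"

definition supertile ::
  "int ^ 'm ^ 'm \<Rightarrow> (int ^ 'm) set \<Rightarrow> ('a \<Rightarrow> 'a \<Rightarrow> 'a) \<Rightarrow> (int ^ 'm \<Rightarrow> int ^ 'm \<Rightarrow> 'a)
    \<Rightarrow> nat \<Rightarrow> 'a \<times> (int ^ 'm) \<Rightarrow> (int ^ 'm \<Rightarrow> ('a \<times> (int ^ 'm)) option)" where
  "supertile Q D gop W n l = (subst_patch Q D gop W ^^ n) (\<lambda>x. if x = 0 then Some l else None)"

definition rect :: "int ^ 'm \<Rightarrow> int ^ 'm \<Rightarrow> (int ^ 'm) set" where
  "rect a b = {x. \<forall>i. a $ i \<le> x $ i \<and> x $ i \<le> b $ i}"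

definition subshift ::
  "int ^ 'm ^ 'm \<Rightarrow> (int ^ 'm) set \<Rightarrow> ('a \<Rightarrow> 'a \<Rightarrow> 'a) \<Rightarrow> (int ^ 'm \<Rightarrow> int ^ 'm \<Rightarrow> 'a) \<Rightarrow> 'a set
    \<Rightarrow> (int ^ 'm \<Rightarrow> 'a \<times> (int ^ 'm)) set" where
  "subshift Q D gop W A =
     {T. \<forall>a b. \<exists>n l k. l \<in> A \<times> D \<and>
          (\<forall>x \<in> rect a b. supertile Q D gop W n l (x + k) = Some (T x))}"

text \<open>Shift: (T - j)(x) = T(x + j).\<close>
definition shift :: "int ^ 'm \<Rightarrow> (int ^ 'm \<Rightarrow> 'b) \<Rightarrow> (int ^ 'm \<Rightarrow> 'b)" where
  "shift j T = (\<lambda>x. T (x + j))"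

definition subst_matrix ::
  "(int ^ 'm) set \<Rightarrow> ('a \<Rightarrow> 'a \<Rightarrow> 'a) \<Rightarrow> (int ^ 'm \<Rightarrow> int ^ 'm \<Rightarrow> 'a)
    \<Rightarrow> 'a \<times> (int ^ 'm) \<Rightarrow> 'a \<times> (int ^ 'm) \<Rightarrow> nat" where
  "subst_matrix D gop W l l' = card {d' \<in> D. subst_letter gop W l' d' = l}"

fun matpow :: "'l set \<Rightarrow> ('l \<Rightarrow> 'l \<Rightarrow> nat) \<Rightarrow> nat \<Rightarrow> 'l \<Rightarrow> 'l \<Rightarrow> nat" where
  "matpow Alph M 0 l l' = (if l = l' then 1 else 0)"
| "matpow Alph M (Suc k) l l' = (\<Sum>c\<in>Alph. M l c * matpow Alph M k c l')"

definition primitive ::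
  "(int ^ 'm) set \<Rightarrow> ('a \<Rightarrow> 'a \<Rightarrow> 'a) \<Rightarrow> (int ^ 'm \<Rightarrow> int ^ 'm \<Rightarrow> 'a) \<Rightarrow> 'a set \<Rightarrow> bool" where
  "primitive D gop W A \<longleftrightarrow>
     (\<exists>k>0. \<forall>l \<in> A \<times> D. \<forall>l' \<in> A \<times> D. matpow (A \<times> D) (subst_matrix D gop W) k l l' > 0)"

definition aperiodic_set :: "(int ^ 'm \<Rightarrow> 'b) set \<Rightarrow> bool" where
  "aperiodic_set Sig \<longleftrightarrow> (\<forall>T \<in> Sig. \<forall>j. j \<noteq> 0 \<longrightarrow> shift j T \<noteq> T)"

definition cyl_sigma :: "(int ^ 'm \<Rightarrow> 'b) measure" where
  "cyl_sigma = sigma UNIV {{T. T x = a} | x a. True}"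

definition box :: "nat \<Rightarrow> (int ^ 'm) set" where
  "box N = {j. \<forall>i. \<bar>j $ i\<bar> \<le> int N}"

definition is_freq_measure :: "(int ^ 'm \<Rightarrow> 'b) set \<Rightarrow> (int ^ 'm \<Rightarrow> 'b) measure \<Rightarrow> bool" where
  "is_freq_measure Sig \<mu> \<longleftrightarrow>
     sets \<mu> = sets cyl_sigma \<and> prob_space \<mu> \<and> (AE T in \<mu>. T \<in> Sig) \<and>
     (\<forall>F p T. finite F \<longrightarrow> T \<in> Sig \<longrightarrow>
        (\<lambda>N. real (card {j \<in> box N. \<forall>x \<in> F. T (x + j) = p x}) / real (card (box N :: (int ^ 'm) set)))
          \<longlonglongrightarrow> measure \<mu> {T. \<forall>x \<in> F. T x = p x})"

definition L2 :: "'c measure \<Rightarrow> ('c \<Rightarrow> complex) \<Rightarrow> bool" where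
  "L2 \<mu> f \<longleftrightarrow> f \<in> borel_measurable \<mu> \<and> integrable \<mu> (\<lambda>x. (cmod (f x))\<^sup>2)"

definition torus :: "(complex ^ 'm) set" where
  "torus = {z. \<forall>i. cmod (z $ i) = 1}"

definition zpow :: "complex ^ 'm \<Rightarrow> int ^ 'm \<Rightarrow> complex" where
  "zpow z j = (\<Prod>i\<in>UNIV. (z $ i) powi (j $ i))"

text \<open>Spectral measure of f for the Koopman representation U_j f(T) = f(T - j):
  a finite Borel measure on the torus with <U_j f, f> = \<integral> z^j d\<sigma>.\<close>
definition spectral_measure ::
  "(int ^ 'm \<Rightarrow> 'b) measure \<Rightarrow> ((int ^ 'm \<Rightarrow> 'b) \<Rightarrow> complex) \<Rightarrow> (complex ^ 'm) measure \<Rightarrow> bool" where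
  "spectral_measure \<mu> f \<sigma> \<longleftrightarrow>
     sets \<sigma> = sets borel \<and> finite_measure \<sigma> \<and> emeasure \<sigma> (UNIV - torus) = 0 \<and>
     (\<forall>j. (\<integral>T. f (shift j T) * cnj (f T) \<partial>\<mu>) = (\<integral>z. zpow z j \<partial>\<sigma>))"

definition max_spectral_type ::
  "(int ^ 'm \<Rightarrow> 'b) measure \<Rightarrow> (complex ^ 'm) measure \<Rightarrow> bool" where
  "max_spectral_type \<mu> \<nu> \<longleftrightarrow>
     sets \<nu> = sets borel \<and>
     (\<forall>g \<sigma>. L2 \<mu> g \<longrightarrow> spectral_measure \<mu> g \<sigma> \<longrightarrow> absolutely_continuous \<nu> \<sigma>) \<and>
     (\<exists>g \<sigma>. L2 \<mu> g \<and> spectral_measure \<mu> g \<sigma> \<and> absolutely_continuous \<sigma> \<nu>)"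

definition fchi :: "('g \<Rightarrow> complex) \<Rightarrow> int ^ 'm \<Rightarrow> (int ^ 'm \<Rightarrow> 'g \<times> (int ^ 'm)) \<Rightarrow> complex" where
  "fchi chr d T = (if snd (T 0) = d then chr (fst (T 0)) else 0)"

text \<open>H^chi: closed linear span (in L2(\<mu>)) of the functions U_j f^chi_d.\<close>
definition Hchi ::
  "(int ^ 'm \<Rightarrow> 'g \<times> (int ^ 'm)) measure \<Rightarrow> ('g \<Rightarrow> complex) \<Rightarrow> (int ^ 'm) set
     \<Rightarrow> ((int ^ 'm \<Rightarrow> 'g \<times> (int ^ 'm)) \<Rightarrow> complex) set" where
  "Hchi \<mu> chr D = {f. L2 \<mu> f \<and>
     (\<forall>e>0. \<exists>S c. finite S \<and> S \<subseteq> UNIV \<times> D \<and>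
        (\<integral>T. (cmod (f T - (\<Sum>jd\<in>S. c jd * fchi chr (snd jd) (shift (fst jd) T))))\<^sup>2 \<partial>\<mu>) < e)}"

definition character :: "('g::ab_group_add \<Rightarrow> complex) \<Rightarrow> bool" where
  "character chr \<longleftrightarrow> (\<forall>g h. chr (g + h) = chr g * chr h) \<and> (\<forall>g. cmod (chr g) = 1)"

definition factor_map ::
  "('g \<Rightarrow> complex) \<Rightarrow> (int ^ 'm \<Rightarrow> 'g \<times> (int ^ 'm)) \<Rightarrow> (int ^ 'm \<Rightarrow> complex \<times> (int ^ 'm))" where
  "factor_map chr T = (\<lambda>x. (chr (fst (T x)), snd (T x)))"

end

theory Submission
  imports Defs "HOL-Real_Asymp.Real_Asymp"
begin


definition fmL :: "('g \<Rightarrow> complex) \<Rightarrow> 'g \<times> 'd \<Rightarrow> complex \<times> 'd" where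
  "fmL chr l = (chr (fst l), snd l)"

lemma factor_map_fmL: "factor_map chr T = (\<lambda>x. fmL chr (T x))"
  by (simp add: factor_map_def fmL_def)

lemma subst_patch_commute:
  fixes W :: "int ^ 'm \<Rightarrow> int ^ 'm \<Rightarrow> 'g::ab_group_add"
  assumes chr: "character chr"
  shows "subst_patch Q D (*) (\<lambda>d d'. chr (W d d')) (\<lambda>y. map_option (fmL chr) (P y))
       = (\<lambda>y. map_option (fmL chr) (subst_patch Q D (+) W P y))"
proof
  fix y
  have hom: "\<And>g h. chr (g + h) = chr g * chr h" using chr by (simp add: character_def)
  show "subst_patch Q D (*) (\<lambda>d d'. chr (W d d')) (\<lambda>y. map_option (fmL chr) (P y)) y
       = map_option (fmL chr) (subst_patch Q D (+) W P y)"
  proof (cases "\<exists>x d'. d' \<in> D \<and> y = Q *v x + d' \<and> P x \<noteq> None")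
    case True
    let ?xd = "SOME xd. snd xd \<in> D \<and> y = Q *v fst xd + snd xd \<and> P (fst xd) \<noteq> None"
    from True obtain x0 d0 where h0: "d0 \<in> D \<and> y = Q *v x0 + d0 \<and> P x0 \<noteq> None" by blast
    have "snd ?xd \<in> D \<and> y = Q *v fst ?xd + snd ?xd \<and> P (fst ?xd) \<noteq> None"
      by (rule someI[of _ "(x0, d0)"]) (use h0 in simp)
    moreover have "(\<exists>x d'. d' \<in> D \<and> y = Q *v x + d' \<and> map_option (fmL chr) (P x) \<noteq> None)"
      using True by simp
    moreover have "(\<lambda>xd. snd xd \<in> D \<and> y = Q *v fst xd + snd xd \<and> map_option (fmL chr) (P (fst xd)) \<noteq> None)
       = (\<lambda>xd. snd xd \<in> D \<and> y = Q *v fst xd + snd xd \<and> P (fst xd) \<noteq> None)"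
      by simp
    ultimately show ?thesis using True
      unfolding subst_patch_def Let_def
      by (auto simp add: subst_letter_def fmL_def hom)
  next
    case False
    have c2: "\<not> (\<exists>x d'. d' \<in> D \<and> y = Q *v x + d' \<and> map_option (fmL chr) (P x) \<noteq> None)"
      using False by simp
    show ?thesis unfolding subst_patch_def
      by (simp only: if_not_P[OF False] if_not_P[OF c2] option.map(1))
  qed
qed

lemma supertile_commute:
  fixes W :: "int ^ 'm \<Rightarrow> int ^ 'm \<Rightarrow> 'g::ab_group_add"
  assumes chr: "character chr"
  shows "supertile Q D (*) (\<lambda>d d'. chr (W d d')) n (fmL chr l)
       = (\<lambda>y. map_option (fmL chr) (supertile Q D (+) W n l y))"
proof (induction n)
  case 0
  then show ?case by (auto simp: supertile_def)
next
  case (Suc n)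
  then show ?case
    using subst_patch_commute[OF chr, of Q D W "supertile Q D (+) W n l"]
    by (simp add: supertile_def)
qed



lemma vec_set_eq: "{x::'a^'n. \<forall>i. x$i \<in> S i} = vec_lambda ` PiE UNIV S"
proof (intro set_eqI iffI)
  fix x :: "'a^'n" assume "x \<in> {x. \<forall>i. x$i \<in> S i}"
  then have "(\<lambda>i. x$i) \<in> PiE UNIV S" by auto
  moreover have "x = vec_lambda (\<lambda>i. x$i)" by simp
  ultimately show "x \<in> vec_lambda ` PiE UNIV S" by blast
qed auto

lemma vec_set_finite: "(\<And>i. finite (S i)) \<Longrightarrow> finite {x::'a^'n. \<forall>i. x$i \<in> S i}"
  unfolding vec_set_eq by (intro finite_imageI finite_PiE) auto

lemma vec_set_card: "card {x::'a^'n. \<forall>i. x$i \<in> S i} = (\<Prod>i\<in>UNIV. card (S i))"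
proof -
  have "inj_on vec_lambda (PiE (UNIV::'n set) S)"
    by (intro inj_onI) (metis vec_lambda_inverse UNIV_I)
  then show ?thesis unfolding vec_set_eq by (simp add: card_image card_PiE)
qed

lemma box_eq: "box N = {x::int^'m. \<forall>i. x$i \<in> {- int N..int N}}"
proof -
  have "\<bar>t\<bar> \<le> int N \<longleftrightarrow> t \<in> {- int N..int N}" for t :: int by auto
  then show ?thesis unfolding box_def by simp
qed

lemma finite_box: "finite (box N :: (int^'m) set)"
  unfolding box_eq by (rule vec_set_finite) simp

lemma card_box: "card (box N :: (int^'m) set) = (2 * N + 1) ^ CARD('m)"
proof -
  have "card {- int N..int N} = 2 * N + 1" by simp
  then show ?thesis unfolding box_eq vec_set_card by simp
qed

lemma box_mono: "N \<le> M \<Longrightarrow> box N \<subseteq> box M"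
  by (auto simp: box_def) (meson of_nat_le_iff order_trans)

definition bnd :: "int^'m \<Rightarrow> nat" where "bnd x = nat (\<Sum>i\<in>UNIV. \<bar>x$i\<bar>)"

lemma in_box_bnd: "x \<in> box (bnd x)"
proof -
  have "\<bar>x$i\<bar> \<le> (\<Sum>i\<in>UNIV. \<bar>x$i\<bar>)" for i
    by (rule member_le_sum) auto
  then show ?thesis by (auto simp: box_def bnd_def)
qed

lemma rect_sub_box: "\<exists>N. rect a b \<subseteq> box N"
proof -
  have "\<bar>a$i\<bar> + \<bar>b$i\<bar> \<le> (\<Sum>i\<in>UNIV. \<bar>a$i\<bar> + \<bar>b$i\<bar>)" for i
    by (rule member_le_sum[where f="\<lambda>i. \<bar>a$i\<bar> + \<bar>b$i\<bar>"]) auto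
  moreover have "0 \<le> (\<Sum>i\<in>UNIV. \<bar>a$i\<bar> + \<bar>b$i\<bar>)" by (rule sum_nonneg) auto
  ultimately have "rect a b \<subseteq> box (nat (\<Sum>i\<in>UNIV. \<bar>a$i\<bar> + \<bar>b$i\<bar>))"
    unfolding rect_def box_def
  proof (intro subsetI CollectI allI)
    fix x i assume h: "\<And>i. \<bar>a$i\<bar> + \<bar>b$i\<bar> \<le> (\<Sum>i\<in>UNIV. \<bar>a$i\<bar> + \<bar>b$i\<bar>)"
      and p: "0 \<le> (\<Sum>i\<in>UNIV. \<bar>a$i\<bar> + \<bar>b$i\<bar>)" and x: "x \<in> {x. \<forall>i. a $ i \<le> x $ i \<and> x $ i \<le> b $ i}"
    have "a$i \<le> x$i" "x$i \<le> b$i" using x by auto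
    then have "\<bar>x$i\<bar> \<le> \<bar>a$i\<bar> + \<bar>b$i\<bar>" by linarith
    then show "\<bar>x$i\<bar> \<le> int (nat (\<Sum>i\<in>UNIV. \<bar>a$i\<bar> + \<bar>b$i\<bar>))" using h[of i] p by linarith
  qed
  then show ?thesis by blast
qed

lemma box_rect: "box N = rect (\<chi> i. - int N) (\<chi> i. int N)"
  unfolding box_def rect_def by (simp add: abs_le_iff all_conj_distrib conj_commute minus_le_iff)

fun kseq :: "('q \<Rightarrow> bool) \<Rightarrow> (nat \<Rightarrow> 'q \<Rightarrow> 'q \<Rightarrow> bool) \<Rightarrow> nat \<Rightarrow> 'q" where
  "kseq P0 R 0 = (SOME q. P0 q)"
| "kseq P0 R (Suc n) = (SOME q. R n (kseq P0 R n) q)"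

lemma image_sub:
  fixes W :: "int ^ 'm \<Rightarrow> int ^ 'm \<Rightarrow> 'g::ab_group_add"
  assumes chr: "character chr" and T: "T \<in> subshift Q D (+) W UNIV"
  shows "factor_map chr T \<in> subshift Q D (*) (\<lambda>d d'. chr (W d d')) (range chr)"
  unfolding subshift_def
proof (intro CollectI allI)
  fix a b
  obtain n l k where l: "l \<in> UNIV \<times> D" and h: "\<forall>x \<in> rect a b. supertile Q D (+) W n l (x + k) = Some (T x)"
    using T unfolding subshift_def by blast
  have "fmL chr l \<in> range chr \<times> D" using l by (auto simp: fmL_def)
  moreover have "\<forall>x \<in> rect a b. supertile Q D (*) (\<lambda>d d'. chr (W d d')) n (fmL chr l) (x + k) = Some (factor_map chr T x)"
    using h by (simp add: supertile_commute[OF chr] factor_map_fmL)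
  ultimately show "\<exists>n l k. l \<in> range chr \<times> D \<and>
          (\<forall>x \<in> rect a b. supertile Q D (*) (\<lambda>d d'. chr (W d d')) n l (x + k) = Some (factor_map chr T x))"
    by (intro exI[of _ n] exI[of _ "fmL chr l"] exI[of _ k] conjI)
qed



lemma restrict_restrict': "B \<subseteq> A \<Longrightarrow> restrict (restrict f A) B = restrict f B"
  by (auto simp: restrict_def fun_eq_iff)

context
  fixes Q :: "int ^ 'm ^ 'm" and D :: "(int ^ 'm) set"
    and W :: "int ^ 'm \<Rightarrow> int ^ 'm \<Rightarrow> 'g::{ab_group_add, finite}"
    and chr :: "'g \<Rightarrow> complex"
    and T' :: "int ^ 'm \<Rightarrow> complex \<times> (int ^ 'm)"
  assumes chr: "character chr"
    and T': "T' \<in> subshift Q D (*) (\<lambda>d d'. chr (W d d')) (range chr)"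
begin

definition okL :: "nat \<Rightarrow> (int^'m \<Rightarrow> 'g) \<Rightarrow> bool" where
  "okL N q \<longleftrightarrow> (\<forall>x\<in>box N. chr (q x) = fst (T' x)) \<and>
     (\<exists>n l k. l \<in> UNIV \<times> D \<and> (\<forall>x\<in>box N. supertile Q D (+) W n l (x + k) = Some (q x, snd (T' x))))"

definition LL :: "nat \<Rightarrow> (int^'m \<Rightarrow> 'g) set" where
  "LL N = {q \<in> PiE (box N) (\<lambda>_. UNIV). okL N q}"

lemma LL_finite: "finite (LL N)"
  unfolding LL_def by (rule finite_subset[OF _ finite_PiE[OF finite_box]]) auto

lemma LL_nonempty: "LL N \<noteq> {}"
proof -
  have "\<forall>a b. \<exists>n l k. l \<in> range chr \<times> D \<and>
          (\<forall>x \<in> rect a b. supertile Q D (*) (\<lambda>d d'. chr (W d d')) n l (x + k) = Some (T' x))"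
    using T' unfolding subshift_def by simp
  then have "\<exists>n l k. l \<in> range chr \<times> D \<and>
          (\<forall>x \<in> rect (\<chi> i. - int N) (\<chi> i. int N). supertile Q D (*) (\<lambda>d d'. chr (W d d')) n l (x + k) = Some (T' x))"
    by (elim allE)
  then obtain n l' k where l': "l' \<in> range chr \<times> D"
    and h: "\<forall>x \<in> (box N :: (int^'m) set). supertile Q D (*) (\<lambda>d d'. chr (W d d')) n l' (x + k) = Some (T' x)"
    unfolding box_rect[symmetric] by blast
  obtain g where g: "fst l' = chr g" using l' by auto
  define d where "d = snd l'"
  have gd: "l' = fmL chr (g, d)" "d \<in> D" using l' g unfolding d_def by (cases l', simp add: fmL_def)+
  have h2: "\<forall>x \<in> (box N :: (int^'m) set). map_option (fmL chr) (supertile Q D (+) W n (g, d) (x + k)) = Some (T' x)"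
    using h unfolding gd(1) supertile_commute[OF chr] .
  define q where "q = restrict (\<lambda>x::int^'m. fst (the (supertile Q D (+) W n (g, d) (x + k)))) (box N)"
  have hw: "\<exists>w. supertile Q D (+) W n (g, d) (x + k) = Some w \<and> fmL chr w = T' x" if "x \<in> box N" for x :: "int^'m"
  proof -
    have "map_option (fmL chr) (supertile Q D (+) W n (g, d) (x + k)) = Some (T' x)" using h2 that by blast
    then show ?thesis by (cases "supertile Q D (+) W n (g, d) (x + k)") auto
  qed
  have "okL N q" unfolding okL_def
  proof (intro conjI)
    show "\<forall>x\<in>box N. chr (q x) = fst (T' x)"
    proof
      fix x :: "int^'m" assume x: "x \<in> box N"
      then obtain a b where w: "supertile Q D (+) W n (g, d) (x + k) = Some (a, b)" "fmL chr (a, b) = T' x" using hw by (metis surj_pair)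
      then have "T' x = (chr a, b)" by (simp add: fmL_def)
      then show "chr (q x) = fst (T' x)" using x w(1) by (simp add: q_def)
    qed
    have "\<forall>x\<in>(box N :: (int^'m) set). supertile Q D (+) W n (g, d) (x + k) = Some (q x, snd (T' x))"
    proof
      fix x :: "int^'m" assume x: "x \<in> box N"
      then obtain w where w: "supertile Q D (+) W n (g, d) (x + k) = Some w" "fmL chr w = T' x"
        using hw x by blast
      then obtain a b where w2: "supertile Q D (+) W n (g, d) (x + k) = Some (a, b)" "T' x = (chr a, b)"
        by (cases w) (simp add: fmL_def)
      then show "supertile Q D (+) W n (g, d) (x + k) = Some (q x, snd (T' x))"
        using x by (simp add: q_def)
    qed
    then show "\<exists>n l k. l \<in> UNIV \<times> D \<and> (\<forall>x\<in>box N. supertile Q D (+) W n l (x + k) = Some (q x, snd (T' x)))"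
      using gd(2) by (intro exI[of _ n] exI[of _ "(g, d)"] exI[of _ k]) simp
  qed
  moreover have "q \<in> PiE (box N) (\<lambda>_. UNIV)" by (simp add: q_def)
  ultimately show ?thesis unfolding LL_def by blast
qed

lemma LL_restrict: "N \<le> M \<Longrightarrow> q \<in> LL M \<Longrightarrow> restrict q (box N) \<in> LL N"
proof -
  assume NM: "N \<le> M" and q: "q \<in> LL M"
  have sub: "box N \<subseteq> box M" using box_mono[OF NM] .
  from q obtain n l k where l: "l \<in> UNIV \<times> D" and h: "\<forall>x\<in>box M. supertile Q D (+) W n l (x + k) = Some (q x, snd (T' x))"
    and c: "\<forall>x\<in>box M. chr (q x) = fst (T' x)"
    unfolding LL_def okL_def by blast
  have h': "\<forall>x\<in>box N. supertile Q D (+) W n l (x + k) = Some (restrict q (box N) x, snd (T' x))"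
    using h sub by auto
  have c': "\<forall>x\<in>box N. chr (restrict q (box N) x) = fst (T' x)" using c sub by auto
  have "okL N (restrict q (box N))" unfolding okL_def
    using l h' c' by blast
  then show ?thesis unfolding LL_def by simp
qed

definition good :: "nat \<Rightarrow> (int^'m \<Rightarrow> 'g) \<Rightarrow> bool" where
  "good N q \<longleftrightarrow> q \<in> LL N \<and> (\<forall>M\<ge>N. \<exists>q'\<in>LL M. restrict q' (box N) = q)"

lemma pick_good:
  assumes C: "finite C" "C \<subseteq> LL N" and h: "\<forall>M\<ge>N. \<exists>q'\<in>LL M. restrict q' (box N) \<in> C"
  shows "\<exists>q\<in>C. good N q"
proof (rule ccontr)
  assume "\<not> (\<exists>q\<in>C. good N q)"
  then have "\<forall>q\<in>C. \<exists>M\<ge>N. \<not> (\<exists>q'\<in>LL M. restrict q' (box N) = q)"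
    using C(2) unfolding good_def by blast
  from bchoice[OF this] obtain Mf where Mf0: "\<forall>q\<in>C. Mf q \<ge> N \<and> \<not> (\<exists>q'\<in>LL (Mf q). restrict q' (box N) = q)"
    by blast
  then have Mf: "\<And>q. q \<in> C \<Longrightarrow> Mf q \<ge> N \<and> \<not> (\<exists>q'\<in>LL (Mf q). restrict q' (box N) = q)"
    by blast
  define M where "M = max N (Max (Mf ` C \<union> {0}))"
  have "N \<le> M" unfolding M_def by simp
  then obtain q' where q': "q' \<in> LL M" "restrict q' (box N) \<in> C" using h by blast
  let ?q0 = "restrict q' (box N)"
  have "Mf ?q0 \<le> Max (Mf ` C \<union> {0})" by (rule Max_ge) (use q'(2) C(1) in auto)
  then have "Mf ?q0 \<le> M" unfolding M_def by simp
  then have r: "restrict q' (box (Mf ?q0)) \<in> LL (Mf ?q0)" by (rule LL_restrict[OF _ q'(1)])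
  have "box N \<subseteq> box (Mf ?q0)" using Mf[OF q'(2)] box_mono by blast
  then have "restrict (restrict q' (box (Mf ?q0))) (box N) = ?q0"
    by (metis Int_absorb1 restrict_restrict)
  then show False using Mf[OF q'(2)] r by blast
qed

lemma good0: "\<exists>q. good 0 q"
proof -
  have "\<exists>q'\<in>LL M. restrict q' (box 0) \<in> LL 0" for M
  proof -
    obtain q' where "q' \<in> LL M" using LL_nonempty[of M] by blast
    then show ?thesis using LL_restrict[of 0 M q'] by blast
  qed
  then have "\<forall>M\<ge>0. \<exists>q'\<in>LL M. restrict q' (box 0) \<in> LL 0" by blast
  then show ?thesis using pick_good[OF LL_finite order_refl] by blast
qed

lemma good_step: "good N q \<Longrightarrow> \<exists>q2. good (Suc N) q2 \<and> restrict q2 (box N) = q"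
proof -
  assume g: "good N q"
  let ?C = "{q2 \<in> LL (Suc N). restrict q2 (box N) = q}"
  have hyp: "\<forall>M\<ge>Suc N. \<exists>q'\<in>LL M. restrict q' (box (Suc N)) \<in> ?C"
  proof (intro allI impI)
    fix M assume M: "Suc N \<le> M"
    then have "N \<le> M" by simp
    then obtain q' where q': "q' \<in> LL M" "restrict q' (box N) = q" using g unfolding good_def by blast
    have "box N \<subseteq> box (Suc N)" by (rule box_mono) simp
    then have "restrict (restrict q' (box (Suc N))) (box N) = q" using q'(2) by (metis Int_absorb1 restrict_restrict)
    then show "\<exists>q'\<in>LL M. restrict q' (box (Suc N)) \<in> ?C"
      using q'(1) LL_restrict[OF M q'(1)] by blast
  qed
  have fin: "finite ?C" using LL_finite[of "Suc N"] by simp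
  have sub: "?C \<subseteq> LL (Suc N)" by blast
  obtain q2 where "q2 \<in> ?C" "good (Suc N) q2"
    using pick_good[OF fin sub hyp] by blast
  then show ?thesis by blast
qed

definition sq :: "nat \<Rightarrow> int^'m \<Rightarrow> 'g" where
  "sq = kseq (good 0) (\<lambda>N q q2. good (Suc N) q2 \<and> restrict q2 (box N) = q)"

lemma sq_0: "sq 0 = (SOME q. good 0 q)"
  unfolding sq_def by (simp only: kseq.simps)

lemma sq_Suc: "sq (Suc N) = (SOME q2. good (Suc N) q2 \<and> restrict q2 (box N) = sq N)"
  unfolding sq_def by (simp only: kseq.simps)

lemma sq_good: "good N (sq N)"
proof (induction N)
  case 0 then show ?case unfolding sq_0 using good0 by (rule someI_ex)
next
  case (Suc N)
  have "good (Suc N) (sq (Suc N)) \<and> restrict (sq (Suc N)) (box N) = sq N"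
    using someI_ex[OF good_step[OF Suc]] by (simp only: sq_Suc[symmetric])
  then show ?case by simp
qed

lemma sq_restrict: "restrict (sq (Suc N)) (box N) = sq N"
proof -
  have "good (Suc N) (sq (Suc N)) \<and> restrict (sq (Suc N)) (box N) = sq N"
    using someI_ex[OF good_step[OF sq_good]] by (simp only: sq_Suc[symmetric])
  then show ?thesis by simp
qed

lemma sq_compat: "N \<le> M \<Longrightarrow> x \<in> box N \<Longrightarrow> sq M x = sq N x"
proof (induction M rule: dec_induct)
  case base then show ?case by simp
next
  case (step M)
  have "box N \<subseteq> box M" using step(1) box_mono by blast
  then have "x \<in> box M" using step by blast
  then have "sq (Suc M) x = sq M x" using fun_cong[OF sq_restrict[of M], of x] by simp
  then show ?case using step by simp
qed

definition Tlift :: "int^'m \<Rightarrow> 'g \<times> (int^'m)" where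
  "Tlift (x::int^'m) = (sq (bnd x) x, snd (T' x))"

lemma Tlift_box: "x \<in> box N \<Longrightarrow> Tlift x = (sq N x, snd (T' x))"
proof -
  assume x: "x \<in> box N"
  have "sq (bnd x) x = sq N x"
  proof (cases "bnd x \<le> N")
    case True then show ?thesis using sq_compat[of "bnd x" N x] in_box_bnd[of x] by simp
  next
    case False then show ?thesis using sq_compat[of N "bnd x" x] x by simp
  qed
  then show ?thesis unfolding Tlift_def by simp
qed

lemma lift_exists: "\<exists>T \<in> subshift Q D (+) W UNIV. factor_map chr T = T'"
proof (intro bexI)
  show "factor_map chr Tlift = T'"
  proof
    fix x :: "int^'m"
    have "sq (bnd x) \<in> LL (bnd x)" using sq_good unfolding good_def by blast
    then have "chr (sq (bnd x) x) = fst (T' x)" using in_box_bnd unfolding LL_def okL_def by blast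
    then show "factor_map chr Tlift x = T' x" by (simp add: factor_map_def Tlift_def prod_eq_iff)
  qed
  show "Tlift \<in> subshift Q D (+) W UNIV"
    unfolding subshift_def
  proof (intro CollectI allI)
    fix a b :: "int^'m"
    obtain N where N: "rect a b \<subseteq> box N" using rect_sub_box by blast
    have "sq N \<in> LL N" using sq_good unfolding good_def by blast
    then obtain n l k where "l \<in> UNIV \<times> D" "\<forall>x\<in>box N. supertile Q D (+) W n l (x + k) = Some (sq N x, snd (T' x))"
      unfolding LL_def okL_def by blast
    then show "\<exists>n l k. l \<in> UNIV \<times> D \<and> (\<forall>x\<in>rect a b. supertile Q D (+) W n l (x + k) = Some (Tlift x))"
      using N Tlift_box by (intro exI[of _ n] exI[of _ l] exI[of _ k]) auto
  qed
qed

end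



definition cylG :: "(int ^ 'm \<Rightarrow> 'b) set set" where
  "cylG = {{T. T x = a} | x a. True}"

lemma cyl_sigma_eq: "cyl_sigma = sigma UNIV cylG"
  unfolding cyl_sigma_def cylG_def ..

lemma space_cyl [simp]: "space cyl_sigma = UNIV"
  unfolding cyl_sigma_eq by (simp add: space_measure_of)

lemma sets_cyl: "sets cyl_sigma = sigma_sets UNIV cylG"
  unfolding cyl_sigma_eq by (simp add: sets_measure_of)

lemma cylG_sets: "{T. T x = a} \<in> sets cyl_sigma"
  unfolding sets_cyl cylG_def by (rule sigma_sets.Basic) blast

definition cyl :: "(int ^ 'm) set \<Rightarrow> (int ^ 'm \<Rightarrow> 'b) \<Rightarrow> (int ^ 'm \<Rightarrow> 'b) set" where
  "cyl F p = {T. \<forall>x\<in>F. T x = p x}"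

lemma cyl_sets:
  fixes p :: "int^'m \<Rightarrow> 'b"
  shows "finite F \<Longrightarrow> cyl F p \<in> sets cyl_sigma"
proof (cases "F = {}")
  case True
  then have "cyl F p = space cyl_sigma" by (simp add: cyl_def)
  then show ?thesis using sets.top[of cyl_sigma] by simp
next
  case False
  assume fin: "finite F"
  have "cyl F p = (\<Inter>x\<in>F. {T. T x = p x})" by (auto simp: cyl_def)
  also have "\<dots> \<in> sets cyl_sigma" using fin False by (intro sets.finite_INT) (auto intro: cylG_sets)
  finally show ?thesis .
qed

lemma measurable_cyl_I:
  fixes f :: "(int^'m \<Rightarrow> 'b) \<Rightarrow> (int^'n \<Rightarrow> 'c)"
  assumes "\<And>x a. f -` {T. T x = a} \<in> sets cyl_sigma"
  shows "f \<in> measurable cyl_sigma cyl_sigma"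
proof -
  have "f \<in> measurable cyl_sigma (sigma UNIV cylG)"
  proof (rule measurable_measure_of)
    fix y :: "(int^'n \<Rightarrow> 'c) set" assume "y \<in> cylG"
    then obtain x a where "y = {T. T x = a}" unfolding cylG_def by blast
    then show "f -` y \<inter> space cyl_sigma \<in> sets cyl_sigma" using assms by simp
  qed auto
  then show ?thesis unfolding cyl_sigma_eq[symmetric] .
qed

lemma shift_meas: "shift j \<in> measurable cyl_sigma cyl_sigma"
proof (rule measurable_cyl_I)
  fix x a
  have "shift j -` {T. T x = a} = {T. T (x + j) = a}" by (auto simp: shift_def)
  then show "shift j -` {T. T x = a} \<in> sets cyl_sigma" using cylG_sets by simp
qed

lemma fm_meas:
  fixes chr :: "'g::finite \<Rightarrow> complex"
  shows "(factor_map chr :: (int^'m \<Rightarrow> 'g \<times> (int^'m)) \<Rightarrow> _) \<in> measurable cyl_sigma cyl_sigma"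
proof (rule measurable_cyl_I)
  fix x :: "int^'m" and a :: "complex \<times> (int^'m)"
  have "factor_map chr -` {T. T x = a} = (\<Union>g\<in>{g. chr g = fst a}. {T :: int^'m \<Rightarrow> 'g \<times> (int^'m). T x = (g, snd a)})"
    by (auto simp: factor_map_def prod_eq_iff)
  also have "\<dots> \<in> sets cyl_sigma" using cylG_sets by (intro sets.finite_UN) auto
  finally show "factor_map chr -` {T. T x = a} \<in> sets (cyl_sigma :: (int^'m \<Rightarrow> 'g \<times> (int^'m)) measure)" .
qed

lemma rect_finite: "finite (rect a b :: (int^'m) set)"
  using rect_sub_box[of a b] finite_box by (meson finite_subset)

lemma subshift_sets:
  fixes Q :: "int ^ 'm ^ 'm" and D :: "(int ^ 'm) set" and A :: "'a set"
  assumes A: "countable A"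
  shows "subshift Q D gop W A \<in> sets cyl_sigma"
proof -
  let ?st = "supertile Q D gop W"
  define E where "E a b n l k = (if (\<forall>x\<in>rect a b. ?st n l (x + k) \<noteq> None)
       then cyl (rect a b) (\<lambda>x. the (?st n l (x + k))) else {})" for a b :: "int^'m" and n l k
  have Eset: "E a b n l k = {T. \<forall>x\<in>rect a b. ?st n l (x + k) = Some (T x)}" for a b n l k
  proof (cases "\<forall>x\<in>rect a b. ?st n l (x + k) \<noteq> None")
    case True
    then show ?thesis unfolding E_def cyl_def by force
  next
    case False
    then obtain x where "x \<in> rect a b" "?st n l (x + k) = None" by blast
    then show ?thesis unfolding E_def cyl_def by force
  qed
  have cD: "countable D" by (rule countable_subset[of _ UNIV]) auto
  have "subshift Q D gop W A = (\<Inter>a. \<Inter>b. \<Union>n. \<Union>l\<in>A \<times> D. \<Union>k. E a b n l k)"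
    unfolding subshift_def Eset by blast
  also have "\<dots> \<in> sets cyl_sigma"
  proof -
    have top: "UNIV \<in> sets cyl_sigma" using sets.top[of cyl_sigma] by simp
    have e1: "E a b n l k \<in> sets cyl_sigma" for a b n l k
      unfolding E_def by (simp add: cyl_sets rect_finite)
    have e2: "(\<Union>k. E a b n l k) \<in> sets cyl_sigma" for a b n l
      by (rule sets.countable_UN'') (simp_all add: e1)
    have cAD: "countable (A \<times> D)" using A cD by simp
    have e3: "(\<Union>l\<in>A \<times> D. \<Union>k. E a b n l k) \<in> sets cyl_sigma" for a b n
      by (rule sets.countable_UN''[OF cAD]) (simp add: e2)
    have e4: "(\<Union>n. \<Union>l\<in>A \<times> D. \<Union>k. E a b n l k) \<in> sets cyl_sigma" for a b
      by (rule sets.countable_UN'') (simp_all add: e3)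
    have e5: "(\<Inter>b. \<Union>n. \<Union>l\<in>A \<times> D. \<Union>k. E a b n l k) \<in> sets cyl_sigma" for a
      by (rule sets.countable_INT'') (simp_all add: top e4)
    show ?thesis
      by (rule sets.countable_INT'') (simp_all add: top e5)
  qed
  finally show ?thesis .
qed



lemma card_sub_bounds:
  assumes "finite S" "Z \<subseteq> S"
  shows "card {i\<in>Z. P i} \<le> card {i\<in>S. P i}"
    and "card {i\<in>S. P i} \<le> card {i\<in>Z. P i} + (card S - card Z)"
proof -
  have fZ: "finite Z" using assms finite_subset by blast
  show "card {i\<in>Z. P i} \<le> card {i\<in>S. P i}"
    using assms by (intro card_mono) auto
  have "{i\<in>S. P i} \<subseteq> {i\<in>Z. P i} \<union> (S - Z)" by auto
  then have "card {i\<in>S. P i} \<le> card ({i\<in>Z. P i} \<union> (S - Z))"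
    using assms fZ by (intro card_mono) auto
  also have "\<dots> \<le> card {i\<in>Z. P i} + card (S - Z)" by (rule card_Un_le)
  also have "card (S - Z) = card S - card Z" using assms fZ by (simp add: card_Diff_subset)
  finally show "card {i\<in>S. P i} \<le> card {i\<in>Z. P i} + (card S - card Z)" .
qed

lemma box_bnd_le: "\<bar>j $ k\<bar> \<le> int (bnd j)"
  using in_box_bnd[of j] by (simp add: box_def)

lemma count_shift:
  fixes P :: "int^'m \<Rightarrow> bool" and j :: "int^'m"
  assumes c: "bnd j \<le> N"
  shows "\<bar>real (card {i\<in>box N. P (i + j)}) - real (card {i\<in>box N. P i})\<bar>
          \<le> real (card (box N :: (int^'m) set)) - real (card (box (N - bnd j) :: (int^'m) set))"
proof -
  let ?X = "box N :: (int^'m) set" and ?Z = "box (N - bnd j) :: (int^'m) set"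
  let ?Y = "(\<lambda>i. i + j) ` ?X"
  have inj: "inj (\<lambda>i::int^'m. i + j)" by (intro injI) simp
  have fX: "finite ?X" by (rule finite_box)
  have fY: "finite ?Y" using fX by simp
  have cY: "card ?Y = card ?X" using inj by (simp add: card_image inj_on_def)
  have e: "{i\<in>?Y. P i} = (\<lambda>i. i + j) ` {i\<in>?X. P (i + j)}" by auto
  have c1: "card {i\<in>?X. P (i + j)} = card {i\<in>?Y. P i}"
    unfolding e using inj by (simp add: card_image inj_on_def)
  have ZX: "?Z \<subseteq> ?X" by (rule box_mono) simp
  have ZY: "?Z \<subseteq> ?Y"
  proof
    fix i :: "int^'m" assume i: "i \<in> ?Z"
    have "i - j \<in> ?X" unfolding box_def
    proof (intro CollectI allI)
      fix k
      have "\<bar>i $ k\<bar> \<le> int (N - bnd j)" using i by (simp add: box_def)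
      moreover have "\<bar>j $ k\<bar> \<le> int (bnd j)" by (rule box_bnd_le)
      ultimately show "\<bar>(i - j) $ k\<bar> \<le> int N" using c by simp
    qed
    then show "i \<in> ?Y" by (intro image_eqI[of _ _ "i - j"]) simp_all
  qed
  have a1: "card {i\<in>?Z. P i} \<le> card {i\<in>?X. P i}" "card {i\<in>?X. P i} \<le> card {i\<in>?Z. P i} + (card ?X - card ?Z)"
    using card_sub_bounds[OF fX ZX] by auto
  have a2: "card {i\<in>?Z. P i} \<le> card {i\<in>?Y. P i}" "card {i\<in>?Y. P i} \<le> card {i\<in>?Z. P i} + (card ?X - card ?Z)"
    using card_sub_bounds[OF fY ZY] cY by auto
  have "card ?Z \<le> card ?X" using ZX fX by (rule card_mono[rotated])
  then show ?thesis unfolding c1 using a1 a2 by (simp add: of_nat_diff) linarith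
qed

lemma box_ratio_lim:
  "(\<lambda>N. (real (card (box N :: (int^'m) set)) - real (card (box (N - c) :: (int^'m) set)))
          / real (card (box N :: (int^'m) set))) \<longlonglongrightarrow> 0"
proof -
  let ?m = "CARD('m)"
  have r: "(\<lambda>N. 1 - 2 * real c / (2 * real N + 1)) \<longlonglongrightarrow> 1" by real_asymp
  have "(\<lambda>N. 1 - (1 - 2 * real c / (2 * real N + 1)) ^ ?m) \<longlonglongrightarrow> 1 - 1 ^ ?m"
    by (intro tendsto_intros r)
  then have lim: "(\<lambda>N. 1 - (1 - 2 * real c / (2 * real N + 1)) ^ ?m) \<longlonglongrightarrow> 0" by simp
  have ev: "eventually (\<lambda>N. 1 - (1 - 2 * real c / (2 * real N + 1)) ^ ?m =
     (real (card (box N :: (int^'m) set)) - real (card (box (N - c) :: (int^'m) set)))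
          / real (card (box N :: (int^'m) set))) sequentially"
    using eventually_ge_at_top[of c]
  proof eventually_elim
    case (elim N)
    define A where "A = real (2 * N + 1)"
    define B where "B = real (2 * (N - c) + 1)"
    have A0: "A \<noteq> 0" unfolding A_def by simp
    have "B = A - 2 * real c" unfolding A_def B_def using elim by (simp add: of_nat_diff)
    then have e: "1 - 2 * real c / (2 * real N + 1) = B / A"
      using A0 by (simp add: diff_divide_distrib A_def)
    have "1 - (1 - 2 * real c / (2 * real N + 1)) ^ ?m = 1 - B ^ ?m / A ^ ?m"
      by (simp only: e power_divide)
    also have "\<dots> = (A ^ ?m - B ^ ?m) / A ^ ?m"
      using A0 by (simp add: diff_divide_distrib)
    finally show ?case unfolding card_box A_def B_def by simp
  qed
  show ?thesis using tendsto_cong[OF ev] lim by simp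
qed

context
  fixes Sig :: "(int^'m \<Rightarrow> 'b) set" and \<mu> :: "(int^'m \<Rightarrow> 'b) measure"
  assumes fm: "is_freq_measure Sig \<mu>"
begin

lemma mu_prob: "prob_space \<mu>" using fm unfolding is_freq_measure_def by blast

lemma mu_sets: "sets \<mu> = sets cyl_sigma" using fm unfolding is_freq_measure_def by blast

lemma mu_space: "space \<mu> = UNIV" using sets_eq_imp_space_eq[OF mu_sets] by simp

lemma Sig_nonempty: "Sig \<noteq> {}"
proof
  assume "Sig = {}"
  then have "AE T in \<mu>. False" using fm unfolding is_freq_measure_def by simp
  then show False using prob_space.AE_False[OF mu_prob] by simp
qed

lemma freq_lim:
  assumes "finite F" "T \<in> Sig"
  shows "(\<lambda>N. real (card {j \<in> box N. \<forall>x \<in> F. T (x + j) = p x}) / real (card (box N :: (int ^ 'm) set)))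
          \<longlonglongrightarrow> measure \<mu> (cyl F p)"
  using fm assms unfolding is_freq_measure_def cyl_def by blast

lemma shift_cyl: "shift j -` cyl F p = cyl ((\<lambda>x. x + j) ` F) (\<lambda>y. p (y - j))"
  by (auto simp: shift_def cyl_def)

lemma measure_shift_cyl:
  assumes F: "finite F"
  shows "measure \<mu> (shift j -` cyl F p) = measure \<mu> (cyl F p)"
proof -
  obtain T0 where T0: "T0 \<in> Sig" using Sig_nonempty by blast
  define P where "P i = (\<forall>x\<in>F. T0 (x + i) = p x)" for i
  let ?a = "\<lambda>N. real (card {i\<in>box N. P i}) / real (card (box N :: (int ^ 'm) set))"
  let ?b = "\<lambda>N. real (card {i\<in>box N. P (i + j)}) / real (card (box N :: (int ^ 'm) set))"
  have la: "?a \<longlonglongrightarrow> measure \<mu> (cyl F p)"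
    using freq_lim[OF F T0, of p] unfolding P_def by simp
  have set_eq: "{i \<in> box N. \<forall>y \<in> (\<lambda>x. x + j) ` F. T0 (y + i) = p (y - j)} = {i\<in>box N. P (i + j)}" for N
    by (auto simp: P_def add_ac)
  have lb: "?b \<longlonglongrightarrow> measure \<mu> (shift j -` cyl F p)"
    using freq_lim[OF _ T0, of "(\<lambda>x. x + j) ` F" "\<lambda>y. p (y - j)"] F
    unfolding shift_cyl set_eq by simp
  have "(\<lambda>N. ?b N - ?a N) \<longlonglongrightarrow> 0"
  proof (rule Lim_null_comparison)
    show "eventually (\<lambda>N. norm (?b N - ?a N) \<le>
       (real (card (box N :: (int^'m) set)) - real (card (box (N - bnd j) :: (int^'m) set)))
          / real (card (box N :: (int^'m) set))) sequentially"
      using eventually_ge_at_top[of "bnd j"]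
    proof eventually_elim
      case (elim N)
      have pos: "0 < real (card (box N :: (int^'m) set))" using finite_box card_box by (simp add: card_box)
      have "norm (?b N - ?a N) = \<bar>real (card {i\<in>box N. P (i + j)}) - real (card {i\<in>box N. P i})\<bar>
             / real (card (box N :: (int^'m) set))"
        using pos by (simp add: diff_divide_distrib[symmetric])
      also have "\<dots> \<le> (real (card (box N :: (int^'m) set)) - real (card (box (N - bnd j) :: (int^'m) set)))
          / real (card (box N :: (int^'m) set))"
        using count_shift[OF elim, of P] pos by (intro divide_right_mono) auto
      finally show ?case .
    qed
    show "(\<lambda>N. (real (card (box N :: (int^'m) set)) - real (card (box (N - bnd j) :: (int^'m) set)))
          / real (card (box N :: (int^'m) set))) \<longlonglongrightarrow> 0"
      by (rule box_ratio_lim)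
  qed
  then have "(\<lambda>N. (?b N - ?a N) + ?a N) \<longlonglongrightarrow> 0 + measure \<mu> (cyl F p)"
    by (intro tendsto_add la)
  then have "?b \<longlonglongrightarrow> measure \<mu> (cyl F p)" by simp
  then show ?thesis using lb LIMSEQ_unique by blast
qed

end



definition cylE :: "(int ^ 'm \<Rightarrow> 'b) set set" where
  "cylE = {cyl F p | F p. finite F} \<union> {{}}"

lemma cylE_Int_stable: "Int_stable (cylE :: (int ^ 'm \<Rightarrow> 'b) set set)"
  unfolding Int_stable_def
proof (intro ballI)
  fix a b :: "(int ^ 'm \<Rightarrow> 'b) set" assume a: "a \<in> cylE" and b: "b \<in> cylE"
  show "a \<inter> b \<in> cylE"
  proof (cases "a = {} \<or> b = {}")
    case True then show ?thesis by (auto simp: cylE_def)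
  next
    case False
    then obtain F p G q where F: "finite F" "a = cyl F p" and G: "finite G" "b = cyl G q"
      using a b unfolding cylE_def by blast
    show ?thesis
    proof (cases "\<exists>x\<in>F \<inter> G. p x \<noteq> q x")
      case True
      then have "a \<inter> b = {}" using F G by (auto simp: cyl_def)
      then show ?thesis by (simp add: cylE_def)
    next
      case False
      then have "a \<inter> b = cyl (F \<union> G) (\<lambda>x. if x \<in> F then p x else q x)"
        using F G by (auto simp: cyl_def)
      then show ?thesis using F G unfolding cylE_def by blast
    qed
  qed
qed

lemma sets_cyl_E: "sets cyl_sigma = sigma_sets UNIV (cylE :: (int ^ 'm \<Rightarrow> 'b) set set)"
  unfolding sets_cyl
proof (rule sigma_sets_eqI)
  fix a :: "(int ^ 'm \<Rightarrow> 'b) set" assume "a \<in> cylG"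
  then obtain x c where "a = {T. T x = c}" unfolding cylG_def by blast
  then have "a = cyl {x} (\<lambda>_. c)" by (auto simp: cyl_def)
  then have "a \<in> cylE" unfolding cylE_def by blast
  then show "a \<in> sigma_sets UNIV cylE" by (rule sigma_sets.Basic)
next
  fix b :: "(int ^ 'm \<Rightarrow> 'b) set" assume "b \<in> cylE"
  then have "b \<in> sets cyl_sigma" unfolding cylE_def using cyl_sets by auto
  then show "b \<in> sigma_sets UNIV cylG" unfolding sets_cyl .
qed

context
  fixes Sig :: "(int^'m \<Rightarrow> 'b) set" and \<mu> :: "(int^'m \<Rightarrow> 'b) measure"
  assumes fm: "is_freq_measure Sig \<mu>"
begin

lemma shift_meas_mu: "shift j \<in> measurable \<mu> cyl_sigma"
  using shift_meas measurable_cong_sets[OF mu_sets[OF fm] refl] by blast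

lemma shift_meas_mu2: "shift j \<in> measurable \<mu> \<mu>"
  using shift_meas measurable_cong_sets[OF mu_sets[OF fm] mu_sets[OF fm]] by blast

lemma mu_shift_inv: "distr \<mu> cyl_sigma (shift j) = \<mu>"
proof (rule measure_eqI_generator_eq[OF cylE_Int_stable, where \<Omega>=UNIV and A="\<lambda>_. UNIV"])
  interpret P: prob_space \<mu> by (rule mu_prob[OF fm])
  show "cylE \<subseteq> Pow UNIV" by simp
  show "sets (distr \<mu> cyl_sigma (shift j)) = sigma_sets UNIV cylE" using sets_cyl_E by simp
  show "sets \<mu> = sigma_sets UNIV cylE" using sets_cyl_E mu_sets[OF fm] by simp
  have U: "(UNIV :: (int^'m \<Rightarrow> 'b) set) = cyl {} (\<lambda>_. undefined)" by (simp add: cyl_def)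
  have "cyl {} (\<lambda>_. undefined) \<in> (cylE :: (int^'m \<Rightarrow> 'b) set set)" unfolding cylE_def by blast
  then show "range (\<lambda>_. UNIV) \<subseteq> (cylE :: (int^'m \<Rightarrow> 'b) set set)" using U by auto
  show "(\<Union>i::nat. UNIV) = (UNIV :: (int^'m \<Rightarrow> 'b) set)" by simp
  show "emeasure (distr \<mu> cyl_sigma (shift j)) UNIV \<noteq> \<infinity>" for i :: nat
  proof -
    have U2: "UNIV \<in> sets (cyl_sigma :: (int^'m \<Rightarrow> 'b) measure)" using sets.top[of cyl_sigma] by simp
    have "emeasure (distr \<mu> cyl_sigma (shift j)) UNIV = emeasure \<mu> (space \<mu>)"
      using emeasure_distr[OF shift_meas_mu U2] mu_space[OF fm] by simp
    then show ?thesis using P.emeasure_space_1 by simp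
  qed
  fix X :: "(int^'m \<Rightarrow> 'b) set" assume X: "X \<in> cylE"
  show "emeasure (distr \<mu> cyl_sigma (shift j)) X = emeasure \<mu> X"
  proof (cases "X = {}")
    case True then show ?thesis by simp
  next
    case False
    then obtain F p where F: "finite F" "X = cyl F p" using X unfolding cylE_def by blast
    have XS: "X \<in> sets cyl_sigma" using F cyl_sets by simp
    have "emeasure (distr \<mu> cyl_sigma (shift j)) X = emeasure \<mu> (shift j -` X)"
      using emeasure_distr[OF shift_meas_mu XS] mu_space[OF fm] by simp
    also have "\<dots> = ennreal (measure \<mu> (shift j -` X))" by (simp add: P.emeasure_eq_measure)
    also have "measure \<mu> (shift j -` X) = measure \<mu> X" unfolding F(2) by (rule measure_shift_cyl[OF fm F(1)])
    also have "ennreal (measure \<mu> X) = emeasure \<mu> X" by (simp add: P.emeasure_eq_measure)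
    finally show ?thesis .
  qed
qed

lemma AE_shift: "(AE T in \<mu>. P T) \<Longrightarrow> (AE T in \<mu>. P (shift j T))"
proof -
  assume h: "AE T in \<mu>. P T"
  have "AE T in distr \<mu> cyl_sigma (shift j). P T" unfolding mu_shift_inv by (rule h)
  then show ?thesis by (rule AE_distrD[OF shift_meas_mu])
qed

end



lemma lift_char:
  fixes chr :: "'g \<Rightarrow> complex" and p :: "int^'m \<Rightarrow> complex \<times> (int^'m)"
  shows "(\<forall>x\<in>F. fmL chr (s x) = p x) \<longleftrightarrow>
     restrict s F \<in> PiE F (\<lambda>x. (\<lambda>g. (g, snd (p x))) ` {g. chr g = fst (p x)})"
proof -
  have one: "fmL chr (s x) = p x \<longleftrightarrow> s x \<in> (\<lambda>g. (g, snd (p x))) ` {g. chr g = fst (p x)}" for x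
  proof
    assume h: "fmL chr (s x) = p x"
    obtain a b where ab: "s x = (a, b)" by (cases "s x")
    then have e: "(chr a, b) = p x" using h by (simp add: fmL_def)
    have "chr a = fst (p x)" by (metis e fst_conv)
    moreover have "b = snd (p x)" by (metis e snd_conv)
    ultimately have "chr a = fst (p x)" "b = snd (p x)" by auto
    then show "s x \<in> (\<lambda>g. (g, snd (p x))) ` {g. chr g = fst (p x)}"
      unfolding ab by (intro image_eqI[of _ _ a]) auto
  next
    assume "s x \<in> (\<lambda>g. (g, snd (p x))) ` {g. chr g = fst (p x)}"
    then obtain g where g: "s x = (g, snd (p x))" "chr g = fst (p x)" by blast
    then show "fmL chr (s x) = p x" by (simp add: fmL_def)
  qed
  show ?thesis unfolding restrict_PiE_iff using one by simp
qed

lemma freq_factor: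
  fixes Q :: "int ^ 'm ^ 'm"
    and D :: "(int ^ 'm) set"
    and W :: "int ^ 'm \<Rightarrow> int ^ 'm \<Rightarrow> 'g::{ab_group_add, finite}"
    and \<mu> :: "(int ^ 'm \<Rightarrow> 'g \<times> (int ^ 'm)) measure"
    and chr :: "'g \<Rightarrow> complex"
  assumes chr: "character chr"
    and fm: "is_freq_measure (subshift Q D (+) W UNIV) \<mu>"
  shows "is_freq_measure (subshift Q D (*) (\<lambda>d d'. chr (W d d')) (range chr))
                         (distr \<mu> cyl_sigma (factor_map chr))"
proof -
  let ?Sig = "subshift Q D (+) W UNIV"
  let ?Sig' = "subshift Q D (*) (\<lambda>d d'. chr (W d d')) (range chr)"
  let ?fm = "factor_map chr :: (int ^ 'm \<Rightarrow> 'g \<times> (int ^ 'm)) \<Rightarrow> _"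
  interpret P: prob_space \<mu> by (rule mu_prob[OF fm])
  have meas: "?fm \<in> measurable \<mu> cyl_sigma"
    using fm_meas measurable_cong_sets[OF mu_sets[OF fm] refl] by blast
  have S1: "sets (distr \<mu> cyl_sigma ?fm) = sets cyl_sigma" by simp
  have S2: "prob_space (distr \<mu> cyl_sigma ?fm)" by (rule P.prob_space_distr[OF meas])
  have Sig'_sets: "?Sig' \<in> sets cyl_sigma"
    by (rule subshift_sets) (simp add: countable_finite)
  have "AE T in \<mu>. T \<in> ?Sig" using fm unfolding is_freq_measure_def by blast
  then have "AE T in \<mu>. ?fm T \<in> ?Sig'"
    by (rule eventually_mono) (rule image_sub[OF chr])
  then have S3: "AE T in distr \<mu> cyl_sigma ?fm. T \<in> ?Sig'"
    using AE_distr_iff[OF meas, of "\<lambda>T. T \<in> ?Sig'"] Sig'_sets by simp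
  have S4: "(\<lambda>N. real (card {j \<in> box N. \<forall>x \<in> F. T' (x + j) = p x}) / real (card (box N :: (int ^ 'm) set)))
          \<longlonglongrightarrow> measure (distr \<mu> cyl_sigma ?fm) {T. \<forall>x \<in> F. T x = p x}"
    if F: "finite F" and T': "T' \<in> ?Sig'" for F p T'
  proof -
    obtain T where T: "T \<in> ?Sig" and TT': "?fm T = T'" using lift_exists[OF chr T'] by blast
    define Lf where "Lf = PiE F (\<lambda>x. (\<lambda>g. (g, snd (p x))) ` {g. chr g = fst (p x)})"
    have fLf: "finite Lf" unfolding Lf_def using F by (intro finite_PiE) auto
    define A where "A N q = {i \<in> box N. \<forall>x\<in>F. T (x + i) = q x}" for N q
    have cnt: "{j \<in> box N. \<forall>x \<in> F. T' (x + j) = p x} = (\<Union>q\<in>Lf. A N q)" for N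
    proof (intro set_eqI iffI)
      fix i assume "i \<in> {j \<in> box N. \<forall>x \<in> F. T' (x + j) = p x}"
      then have i: "i \<in> box N" "\<forall>x\<in>F. fmL chr (T (x + i)) = p x"
        using TT' by (auto simp: factor_map_fmL)
      then have "restrict (\<lambda>x. T (x + i)) F \<in> Lf" unfolding Lf_def using lift_char[of F chr "\<lambda>x. T (x + i)" p] by simp
      moreover have "i \<in> A N (restrict (\<lambda>x. T (x + i)) F)" using i unfolding A_def by simp
      ultimately show "i \<in> (\<Union>q\<in>Lf. A N q)" by blast
    next
      fix i assume "i \<in> (\<Union>q\<in>Lf. A N q)"
      then obtain q where q: "q \<in> Lf" "i \<in> box N" "\<forall>x\<in>F. T (x + i) = q x" unfolding A_def by blast
      then have "restrict (\<lambda>x. T (x + i)) F = q" unfolding Lf_def by (auto simp: PiE_def extensional_def)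
      then have "restrict (\<lambda>x. T (x + i)) F \<in> Lf" using q(1) by simp
      then have "\<forall>x\<in>F. fmL chr (T (x + i)) = p x"
        using lift_char[of F chr "\<lambda>x. T (x + i)" p] unfolding Lf_def by simp
      then show "i \<in> {j \<in> box N. \<forall>x \<in> F. T' (x + j) = p x}"
        using q(2) TT'[symmetric] by (simp add: factor_map_fmL)
    qed
    have disj: "A N q1 \<inter> A N q2 = {}" if "q1 \<in> Lf" "q2 \<in> Lf" "q1 \<noteq> q2" for N q1 q2
    proof -
      have "\<exists>x\<in>F. q1 x \<noteq> q2 x"
        using PiE_ext[of q1 F _ q2] that unfolding Lf_def by blast
      then obtain x where x: "x \<in> F" "q1 x \<noteq> q2 x" by blast
      then show ?thesis unfolding A_def by auto
    qed
    have finA: "finite (A N q)" for N q unfolding A_def by (rule finite_subset[OF _ finite_box[of N]]) auto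
    have card_eq: "card {j \<in> box N. \<forall>x \<in> F. T' (x + j) = p x} = (\<Sum>q\<in>Lf. card (A N q))" for N
      unfolding cnt by (rule card_UN_disjoint[OF fLf]) (use finA disj in auto)
    have lim: "(\<lambda>N. \<Sum>q\<in>Lf. real (card (A N q)) / real (card (box N :: (int ^ 'm) set)))
          \<longlonglongrightarrow> (\<Sum>q\<in>Lf. measure \<mu> (cyl F q))"
      by (intro tendsto_sum) (unfold A_def, rule freq_lim[OF fm F T])
    have pre: "?fm -` cyl F p \<inter> space \<mu> = (\<Union>q\<in>Lf. cyl F q)"
    proof (intro set_eqI iffI)
      fix S assume "S \<in> ?fm -` cyl F p \<inter> space \<mu>"
      then have "\<forall>x\<in>F. fmL chr (S x) = p x" by (auto simp: cyl_def factor_map_fmL)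
      then have "restrict S F \<in> Lf" unfolding Lf_def using lift_char[of F chr S p] by simp
      moreover have "S \<in> cyl F (restrict S F)" by (simp add: cyl_def)
      ultimately show "S \<in> (\<Union>q\<in>Lf. cyl F q)" by blast
    next
      fix S assume "S \<in> (\<Union>q\<in>Lf. cyl F q)"
      then obtain q where q: "q \<in> Lf" "\<forall>x\<in>F. S x = q x" unfolding cyl_def by blast
      then have "restrict S F = q" unfolding Lf_def by (auto simp: PiE_def extensional_def)
      then have "restrict S F \<in> Lf" using q(1) by simp
      then have "\<forall>x\<in>F. fmL chr (S x) = p x"
        using lift_char[of F chr S p] unfolding Lf_def by simp
      then show "S \<in> ?fm -` cyl F p \<inter> space \<mu>" by (simp add: cyl_def factor_map_fmL mu_space[OF fm])
    qed
    have "measure (distr \<mu> cyl_sigma ?fm) {T. \<forall>x \<in> F. T x = p x} = measure (distr \<mu> cyl_sigma ?fm) (cyl F p)"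
      by (simp add: cyl_def)
    also have "\<dots> = measure \<mu> (\<Union>q\<in>Lf. cyl F q)"
      using measure_distr[OF meas cyl_sets[OF F]] pre by simp
    also have "\<dots> = (\<Sum>q\<in>Lf. measure \<mu> (cyl F q))"
    proof (rule measure_finite_Union[OF fLf])
      show "(\<lambda>q. cyl F q) ` Lf \<subseteq> sets \<mu>" using cyl_sets[OF F] mu_sets[OF fm] by auto
      show "disjoint_family_on (\<lambda>q. cyl F q) Lf"
        unfolding disjoint_family_on_def
      proof (intro ballI impI)
        fix q1 q2 assume "q1 \<in> Lf" "q2 \<in> Lf" "q1 \<noteq> q2"
        then have "\<exists>x\<in>F. q1 x \<noteq> q2 x"
          using PiE_ext[of q1 F _ q2] unfolding Lf_def by blast
        then obtain x where "x \<in> F" "q1 x \<noteq> q2 x" by blast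
        then show "cyl F q1 \<inter> cyl F q2 = {}" by (auto simp: cyl_def)
      qed
      show "emeasure \<mu> (cyl F q) \<noteq> \<infinity>" for q by simp
    qed
    finally have meq: "measure (distr \<mu> cyl_sigma ?fm) {T. \<forall>x \<in> F. T x = p x} = (\<Sum>q\<in>Lf. measure \<mu> (cyl F q))" .
    have "(\<lambda>N. real (card {j \<in> box N. \<forall>x \<in> F. T' (x + j) = p x}) / real (card (box N :: (int ^ 'm) set)))
        = (\<lambda>N. \<Sum>q\<in>Lf. real (card (A N q)) / real (card (box N :: (int ^ 'm) set)))"
      by (simp add: card_eq sum_divide_distrib)
    then show ?thesis using lim meq by simp
  qed
  show ?thesis unfolding is_freq_measure_def
  proof (intro conjI)
    show "sets (distr \<mu> cyl_sigma ?fm) = sets cyl_sigma" by (rule S1)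
    show "prob_space (distr \<mu> cyl_sigma ?fm)" by (rule S2)
    show "AE T in distr \<mu> cyl_sigma ?fm. T \<in> ?Sig'" by (rule S3)
  qed (use S4 in blast)
qed



lemma cnj_meas: "f \<in> borel_measurable M \<Longrightarrow> (\<lambda>x. cnj (f x :: complex)) \<in> borel_measurable M"
proof -
  assume f: "f \<in> borel_measurable M"
  have "cnj \<in> borel_measurable borel"
    by (rule borel_measurable_continuous_onI) (intro continuous_intros)
  then show ?thesis using measurable_compose[OF f] by blast
qed

definition phi :: "('g \<Rightarrow> complex) \<Rightarrow> int^'m \<Rightarrow> int^'m \<Rightarrow> (int^'m \<Rightarrow> complex \<times> (int^'m)) \<Rightarrow> complex" where
  "phi chr d j T' = (\<Sum>z\<in>range chr. z * indicator {T'. T' j = (z, d)} T')"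

lemma phi_meas:
  fixes chr :: "'g::finite \<Rightarrow> complex"
  shows "phi chr d j \<in> borel_measurable cyl_sigma"
  unfolding phi_def
  by (intro borel_measurable_sum borel_measurable_times borel_measurable_const
        borel_measurable_indicator cylG_sets)

lemma phi_fm:
  fixes chr :: "'g::finite \<Rightarrow> complex"
  shows "phi chr d j (factor_map chr T) = fchi chr d (shift j T)"
proof -
  have "phi chr d j (factor_map chr T) = (\<Sum>z\<in>range chr. if z = chr (fst (T j)) then (if snd (T j) = d then z else 0) else 0)"
    unfolding phi_def by (intro sum.cong refl) (auto simp: factor_map_def indicator_def)
  also have "\<dots> = (if snd (T j) = d then chr (fst (T j)) else 0)"
    by (simp add: sum.delta')
  finally show ?thesis by (simp add: fchi_def shift_def)
qed

lemma fchi_bound: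
  assumes "character chr"
  shows "cmod (fchi chr d T) \<le> 1"
  using assms by (simp add: fchi_def character_def)

lemma fchi_meas:
  fixes chr :: "'g::finite \<Rightarrow> complex"
  shows "(\<lambda>T. fchi chr d (shift j T)) \<in> borel_measurable (cyl_sigma :: (int^'m \<Rightarrow> 'g \<times> (int^'m)) measure)"
proof -
  have "(\<lambda>T. phi chr d j (factor_map chr T)) \<in> borel_measurable (cyl_sigma :: (int^'m \<Rightarrow> 'g \<times> (int^'m)) measure)"
    by (rule measurable_compose[OF fm_meas phi_meas])
  then show ?thesis by (simp add: phi_fm)
qed

lemma sq_norm_diff_le: "(cmod (a - b))\<^sup>2 \<le> 2 * (cmod a)\<^sup>2 + 2 * (cmod b)\<^sup>2"
proof -
  have "cmod (a - b) \<le> cmod a + cmod b" by (rule norm_triangle_ineq4)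
  then have "(cmod (a - b))\<^sup>2 \<le> (cmod a + cmod b)\<^sup>2" by (intro power_mono) auto
  also have "\<dots> \<le> 2 * (cmod a)\<^sup>2 + 2 * (cmod b)\<^sup>2"
  proof -
    have h: "0 \<le> (cmod a - cmod b)\<^sup>2" by simp
    then show ?thesis unfolding power2_sum power2_diff by linarith
  qed
  finally show ?thesis .
qed



lemma fm_shift: "factor_map chr (shift j T) = shift j (factor_map chr T)"
  by (simp add: factor_map_def shift_def)

lemma spectral_part:
  fixes Q :: "int ^ 'm ^ 'm"
    and D :: "(int ^ 'm) set"
    and W :: "int ^ 'm \<Rightarrow> int ^ 'm \<Rightarrow> 'g::{ab_group_add, finite}"
    and \<mu> :: "(int ^ 'm \<Rightarrow> 'g \<times> (int ^ 'm)) measure"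
    and chr :: "'g \<Rightarrow> complex"
  assumes chr: "character chr"
    and fm: "is_freq_measure (subshift Q D (+) W UNIV) \<mu>"
    and f: "f \<in> Hchi \<mu> chr D"
    and sp: "spectral_measure \<mu> f \<sigma>"
    and mx: "max_spectral_type (distr \<mu> cyl_sigma (factor_map chr)) \<nu>"
  shows "absolutely_continuous \<nu> \<sigma>"
proof -
  let ?fm = "factor_map chr :: (int ^ 'm \<Rightarrow> 'g \<times> (int ^ 'm)) \<Rightarrow> _"
  interpret P: prob_space \<mu> by (rule mu_prob[OF fm])
  have meas: "?fm \<in> measurable \<mu> cyl_sigma"
    using fm_meas measurable_cong_sets[OF mu_sets[OF fm] refl] by blast
  have fmeas: "f \<in> borel_measurable \<mu>" and fint: "integrable \<mu> (\<lambda>x. (cmod (f x))\<^sup>2)"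
    using f unfolding Hchi_def L2_def by auto
  have approx: "\<forall>e>0. \<exists>S c. finite S \<and> S \<subseteq> UNIV \<times> D \<and>
        (\<integral>T. (cmod (f T - (\<Sum>jd\<in>S. c jd * fchi chr (snd jd) (shift (fst jd) T))))\<^sup>2 \<partial>\<mu>) < e"
    using f unfolding Hchi_def by blast
  have "\<forall>n::nat. \<exists>Sc. finite (fst Sc) \<and>
        (\<integral>T. (cmod (f T - (\<Sum>jd\<in>fst Sc. snd Sc jd * fchi chr (snd jd) (shift (fst jd) T))))\<^sup>2 \<partial>\<mu>) < inverse (real (Suc n))"
  proof
    fix n :: nat
    have "inverse (real (Suc n)) > 0" by simp
    then obtain S c where "finite S"
        "(\<integral>T. (cmod (f T - (\<Sum>jd\<in>S. c jd * fchi chr (snd jd) (shift (fst jd) T))))\<^sup>2 \<partial>\<mu>) < inverse (real (Suc n))"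
      using approx by blast
    then show "\<exists>Sc. finite (fst Sc) \<and>
        (\<integral>T. (cmod (f T - (\<Sum>jd\<in>fst Sc. snd Sc jd * fchi chr (snd jd) (shift (fst jd) T))))\<^sup>2 \<partial>\<mu>) < inverse (real (Suc n))"
      by (intro exI[of _ "(S, c)"]) simp
  qed
  from choice[OF this] obtain Sc where Sc: "\<And>n. finite (fst (Sc n))"
     "\<And>n. (\<integral>T. (cmod (f T - (\<Sum>jd\<in>fst (Sc n). snd (Sc n) jd * fchi chr (snd jd) (shift (fst jd) T))))\<^sup>2 \<partial>\<mu>) < inverse (real (Suc n))"
    by blast
  define h where "h n T = (\<Sum>jd\<in>fst (Sc n). snd (Sc n) jd * fchi chr (snd jd) (shift (fst jd) T))" for n T
  define h' where "h' n T' = (\<Sum>jd\<in>fst (Sc n). snd (Sc n) jd * phi chr (snd jd) (fst jd) T')" for n T'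
  have hh': "h n T = h' n (?fm T)" for n T
    unfolding h_def h'_def by (simp add: phi_fm)
  have h'meas: "h' n \<in> borel_measurable cyl_sigma" for n
    unfolding h'_def[abs_def]
    by (intro borel_measurable_sum borel_measurable_times borel_measurable_const phi_meas)
  have hmeas: "h n \<in> borel_measurable \<mu>" for n
  proof -
    have "(\<lambda>T. h' n (?fm T)) \<in> borel_measurable \<mu>" by (rule measurable_compose[OF meas h'meas])
    moreover have "h n = (\<lambda>T. h' n (?fm T))" by (rule ext) (rule hh')
    ultimately show ?thesis by simp
  qed
  define B where "B n = (\<Sum>jd\<in>fst (Sc n). cmod (snd (Sc n) jd))" for n
  have hbound: "cmod (h n T) \<le> B n" for n T
  proof -
    have "cmod (h n T) \<le> (\<Sum>jd\<in>fst (Sc n). cmod (snd (Sc n) jd * fchi chr (snd jd) (shift (fst jd) T)))"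
      unfolding h_def by (rule norm_sum)
    also have "\<dots> \<le> B n" unfolding B_def
    proof (rule sum_mono)
      fix jd
      have "cmod (fchi chr (snd jd) (shift (fst jd) T)) \<le> 1" by (rule fchi_bound[OF chr])
      then show "cmod (snd (Sc n) jd * fchi chr (snd jd) (shift (fst jd) T)) \<le> cmod (snd (Sc n) jd)"
        by (simp add: norm_mult mult_left_le)
    qed
    finally show ?thesis .
  qed
  define u where "u n T = (cmod (f T - h n T))\<^sup>2" for n T
  have umeas: "u n \<in> borel_measurable \<mu>" for n
    unfolding u_def[abs_def] using fmeas hmeas[of n] by measurable
  have uint: "integrable \<mu> (u n)" for n
  proof (rule Bochner_Integration.integrable_bound[OF _ umeas])
    show "integrable \<mu> (\<lambda>T. 2 * (cmod (f T))\<^sup>2 + 2 * (B n)\<^sup>2)" using fint by simp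
    show "AE T in \<mu>. norm (u n T) \<le> norm (2 * (cmod (f T))\<^sup>2 + 2 * (B n)\<^sup>2)"
    proof (rule AE_I2)
      fix T
      have "(cmod (h n T))\<^sup>2 \<le> (B n)\<^sup>2" using hbound[of n T] by (intro power_mono) auto
      then have "u n T \<le> 2 * (cmod (f T))\<^sup>2 + 2 * (B n)\<^sup>2"
        unfolding u_def using sq_norm_diff_le[of "f T" "h n T"] by linarith
      moreover have "0 \<le> u n T" unfolding u_def by simp
      ultimately show "norm (u n T) \<le> norm (2 * (cmod (f T))\<^sup>2 + 2 * (B n)\<^sup>2)" by simp
    qed
  qed
  have L1: "(\<lambda>n. \<integral>T. norm (u n T) \<partial>\<mu>) \<longlonglongrightarrow> 0"
  proof (rule Lim_null_comparison[OF _ LIMSEQ_inverse_real_of_nat])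
    show "\<forall>\<^sub>F n in sequentially. norm (\<integral>T. norm (u n T) \<partial>\<mu>) \<le> inverse (real (Suc n))"
    proof (rule always_eventually, rule allI)
      fix n
      have eq: "(\<integral>T. norm (u n T) \<partial>\<mu>) = (\<integral>T. u n T \<partial>\<mu>)" by (simp add: u_def)
      have "0 \<le> (\<integral>T. u n T \<partial>\<mu>)" by (simp add: u_def)
      moreover have "(\<integral>T. u n T \<partial>\<mu>) < inverse (real (Suc n))" using Sc(2)[of n] by (simp add: u_def h_def)
      ultimately show "norm (\<integral>T. norm (u n T) \<partial>\<mu>) \<le> inverse (real (Suc n))" unfolding eq by simp
    qed
  qed
  obtain r :: "nat \<Rightarrow> nat" where r: "strict_mono r" and ae: "AE T in \<mu>. (\<lambda>n. u (r n) T) \<longlonglongrightarrow> 0"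
    using tendsto_L1_AE_subseq[OF uint L1] by blast
  have AEconv: "AE T in \<mu>. (\<lambda>n. h (r n) T) \<longlonglongrightarrow> f T"
  proof (rule eventually_mono[OF ae])
    fix T assume "(\<lambda>n. u (r n) T) \<longlonglongrightarrow> 0"
    then have "(\<lambda>n. sqrt (u (r n) T)) \<longlonglongrightarrow> sqrt 0" by (rule tendsto_real_sqrt)
    then have "(\<lambda>n. norm (f T - h (r n) T)) \<longlonglongrightarrow> 0" by (simp add: u_def)
    then have "(\<lambda>n. f T - h (r n) T) \<longlonglongrightarrow> 0" by (simp add: tendsto_norm_zero_iff)
    then have "(\<lambda>n. f T - (f T - h (r n) T)) \<longlonglongrightarrow> f T - 0" by (intro tendsto_diff tendsto_const)
    then show "(\<lambda>n. h (r n) T) \<longlonglongrightarrow> f T" by simp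
  qed
  define g where "g T' = lim (\<lambda>n. h' (r n) T')" for T'
  have gmeas: "g \<in> borel_measurable cyl_sigma"
    unfolding g_def[abs_def] by (rule borel_measurable_lim_metric) (rule h'meas)
  have AEg: "AE T in \<mu>. g (?fm T) = f T"
  proof (rule eventually_mono[OF AEconv])
    fix T assume "(\<lambda>n. h (r n) T) \<longlonglongrightarrow> f T"
    then show "g (?fm T) = f T" unfolding g_def using hh' by (simp add: limI)
  qed
  have gm2: "g \<in> borel_measurable (distr \<mu> cyl_sigma ?fm)"
    using gmeas by (simp add: measurable_distr_eq1)
  have gfm_meas: "(\<lambda>T. g (?fm T)) \<in> borel_measurable \<mu>" by (rule measurable_compose[OF meas gmeas])
  have g2meas: "(\<lambda>x. (cmod (g x))\<^sup>2) \<in> borel_measurable cyl_sigma" using gmeas by measurable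
  have L2g: "L2 (distr \<mu> cyl_sigma ?fm) g"
    unfolding L2_def
  proof (intro conjI gm2)
    have "integrable \<mu> (\<lambda>T. (cmod (g (?fm T)))\<^sup>2)"
    proof (rule integrable_cong_AE[THEN iffD1, OF _ _ _ fint])
      show "(\<lambda>x. (cmod (f x))\<^sup>2) \<in> borel_measurable \<mu>" using fmeas by measurable
      show "(\<lambda>T. (cmod (g (?fm T)))\<^sup>2) \<in> borel_measurable \<mu>" using gfm_meas by measurable
      show "AE x in \<mu>. (cmod (f x))\<^sup>2 = (cmod (g (?fm x)))\<^sup>2" using AEg by (rule eventually_mono) simp
    qed
    then show "integrable (distr \<mu> cyl_sigma ?fm) (\<lambda>x. (cmod (g x))\<^sup>2)"
      using integrable_distr_eq[OF meas g2meas] by simp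
  qed
  have spg: "spectral_measure (distr \<mu> cyl_sigma ?fm) g \<sigma>"
    unfolding spectral_measure_def
  proof (intro conjI allI)
    show "sets \<sigma> = sets borel" "finite_measure \<sigma>" "emeasure \<sigma> (UNIV - torus) = 0"
      using sp unfolding spectral_measure_def by auto
    fix j :: "int^'m"
    have i1: "(\<lambda>T'. g (shift j T') * cnj (g T')) \<in> borel_measurable cyl_sigma"
      using measurable_compose[OF shift_meas gmeas] gmeas
      by (intro borel_measurable_times cnj_meas) auto
    have "(\<integral>T'. g (shift j T') * cnj (g T') \<partial>distr \<mu> cyl_sigma ?fm)
        = (\<integral>T. g (shift j (?fm T)) * cnj (g (?fm T)) \<partial>\<mu>)"
      by (rule integral_distr[OF meas i1])
    also have "\<dots> = (\<integral>T. f (shift j T) * cnj (f T) \<partial>\<mu>)"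
    proof (rule integral_cong_AE)
      show "(\<lambda>T. g (shift j (?fm T)) * cnj (g (?fm T))) \<in> borel_measurable \<mu>"
        by (rule measurable_compose[OF meas i1])
      have fs: "(\<lambda>T. f (shift j T)) \<in> borel_measurable \<mu>"
        by (rule measurable_compose[OF shift_meas_mu2[OF fm] fmeas])
      show "(\<lambda>T. f (shift j T) * cnj (f T)) \<in> borel_measurable \<mu>"
        using fs fmeas by (intro borel_measurable_times cnj_meas) auto
      have "AE T in \<mu>. g (?fm (shift j T)) = f (shift j T)" by (rule AE_shift[OF fm AEg])
      then show "AE T in \<mu>. g (shift j (?fm T)) * cnj (g (?fm T)) = f (shift j T) * cnj (f T)"
        using AEg by eventually_elim (simp add: fm_shift)
    qed
    also have "\<dots> = (\<integral>z. zpow z j \<partial>\<sigma>)" using sp unfolding spectral_measure_def by blast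
    finally show "(\<integral>T'. g (shift j T') * cnj (g T') \<partial>distr \<mu> cyl_sigma ?fm) = (\<integral>z. zpow z j \<partial>\<sigma>)" .
  qed
  show ?thesis using mx L2g spg unfolding max_spectral_type_def by blast
qed



theorem proposition4p6:
  fixes Q :: "int ^ 'm ^ 'm"
    and D :: "(int ^ 'm) set"
    and W :: "int ^ 'm \<Rightarrow> int ^ 'm \<Rightarrow> 'g::{ab_group_add, finite}"
    and \<mu> :: "(int ^ 'm \<Rightarrow> 'g \<times> (int ^ 'm)) measure"
    and chr :: "'g \<Rightarrow> complex"
  assumes "expansive Q"
    and "coset_reps Q D"
    and "primitive D (+) W UNIV"
    and "aperiodic_set (subshift Q D (+) W UNIV)"
    and "is_freq_measure (subshift Q D (+) W UNIV) \<mu>"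
    and "character chr"
  shows "factor_map chr ` subshift Q D (+) W UNIV
           = subshift Q D (*) (\<lambda>d d'. chr (W d d')) (range chr)
       \<and> (\<forall>(j::int ^ 'm) (T::int ^ 'm \<Rightarrow> 'g \<times> (int ^ 'm)). factor_map chr (shift j T) = shift j (factor_map chr T))
       \<and> factor_map chr \<in> measurable cyl_sigma cyl_sigma
       \<and> is_freq_measure (subshift Q D (*) (\<lambda>d d'. chr (W d d')) (range chr))
                         (distr \<mu> cyl_sigma (factor_map chr))
       \<and> (\<forall>f \<in> Hchi \<mu> chr D. \<forall>\<sigma> \<nu>. spectral_measure \<mu> f \<sigma> \<longrightarrow>
            max_spectral_type (distr \<mu> cyl_sigma (factor_map chr)) \<nu> \<longrightarrow>
            absolutely_continuous \<nu> \<sigma>)"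
proof -
  have chr: "character chr" and fm: "is_freq_measure (subshift Q D (+) W UNIV) \<mu>"
    using assms by auto
  have h1: "factor_map chr ` subshift Q D (+) W UNIV = subshift Q D (*) (\<lambda>d d'. chr (W d d')) (range chr)"
  proof
    show "factor_map chr ` subshift Q D (+) W UNIV \<subseteq> subshift Q D (*) (\<lambda>d d'. chr (W d d')) (range chr)"
      using image_sub[OF chr] by blast
    show "subshift Q D (*) (\<lambda>d d'. chr (W d d')) (range chr) \<subseteq> factor_map chr ` subshift Q D (+) W UNIV"
    proof
      fix T' assume T': "T' \<in> subshift Q D (*) (\<lambda>d d'. chr (W d d')) (range chr)"
      obtain T where "T \<in> subshift Q D (+) W UNIV" "factor_map chr T = T'"
        using lift_exists[OF chr T'] by blast
      then show "T' \<in> factor_map chr ` subshift Q D (+) W UNIV" by blast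
    qed
  qed
  have h2: "\<forall>(j::int ^ 'm) (T::int ^ 'm \<Rightarrow> 'g \<times> (int ^ 'm)). factor_map chr (shift j T) = shift j (factor_map chr T)"
    by (simp add: fm_shift)
  have h3: "factor_map chr \<in> measurable (cyl_sigma :: (int ^ 'm \<Rightarrow> 'g \<times> (int ^ 'm)) measure) cyl_sigma"
    by (rule fm_meas)
  have h4: "is_freq_measure (subshift Q D (*) (\<lambda>d d'. chr (W d d')) (range chr))
                         (distr \<mu> cyl_sigma (factor_map chr))"
    by (rule freq_factor[OF chr fm])
  have h5: "\<forall>f \<in> Hchi \<mu> chr D. \<forall>\<sigma> \<nu>. spectral_measure \<mu> f \<sigma> \<longrightarrow>
            max_spectral_type (distr \<mu> cyl_sigma (factor_map chr)) \<nu> \<longrightarrow>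
            absolutely_continuous \<nu> \<sigma>"
    using spectral_part[OF chr fm] by blast
  show ?thesis by (intro conjI h1 h2 fm_meas h4 h5)
qed


end
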